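(* Let $Q_8=\{\pm1,\pm i,\pm j,\pm k\}$ be the quaternion group. The following d-identities form a basis of d-identities of $Q_8$ (i.e. they all hold in $Q_8$, and every group satisfying all of them is isomorphic to a section of $Q_8$): (1) $\omega_8=\bigvee_{0\le i<j\le 8}(x_i=x_j)$; (2) $x^4=1$; (3) $(x_1\in\langle x_2\rangle)\vee(x_2\in\langle x_1\rangle)\vee(x_1^2x_2^2=1)$; (4) $\Big[\bigvee_{i\ne j,\ i,j\in\{1,2,3\}}x_i\in\langle x_j\rangle\Big]\vee(x_1x_2=x_3)\vee(x_1x_2=x_3^{-1})$.
   Context: A d-identity (disjunctive identity) is a universally quantified formula $\forall x_1\dots x_k\,[(f_1=1)\vee\dots\vee(f_n=1)]$ with the $f_i$ words in the free group on the variables; $u=v$ abbreviates $uv^{-1}=1$. A group satisfies it if it is true for all assignments. For a group $G$, $\mathrm{dvar}(G)$ is the class of groups satisfying every d-identity satisfied by $G$; for finite $G$ it is the class of groups isomorphic to sections (quotients of subgroups) of $G$. A set of d-identities is a basis of d-identities of $G$ if all its members hold in $G$ and every group satisfying them lies in $\mathrm{dvar}(G)$. Notation: "$u\in\langle v\rangle$" abbreviates $(u=1)\vee(u=v)\vee(u=v^2)\vee(u=v^3)$. *)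

theory Defs
  imports "HOL-Algebra.Algebra"
begin

text \<open>Elements of Q8 are signed units: (s, u) stands for (-1)^s * u, u in {1, i, j, k}.\<close>

datatype qunit = QE | QI | QJ | QK

fun umul :: "qunit \<Rightarrow> qunit \<Rightarrow> bool \<times> qunit" where
  "umul QE x = (False, x)"
| "umul QI QE = (False, QI)"
| "umul QJ QE = (False, QJ)"
| "umul QK QE = (False, QK)"
| "umul QI QI = (True, QE)"
| "umul QJ QJ = (True, QE)"
| "umul QK QK = (True, QE)"
| "umul QI QJ = (False, QK)"
| "umul QJ QK = (False, QI)"
| "umul QK QI = (False, QJ)"
| "umul QJ QI = (True, QK)"
| "umul QK QJ = (True, QI)"
| "umul QI QK = (True, QJ)"

definition qmul :: "bool \<times> qunit \<Rightarrow> bool \<times> qunit \<Rightarrow> bool \<times> qunit" where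
  "qmul x y = (case umul (snd x) (snd y) of (r, c) \<Rightarrow> (((fst x \<noteq> fst y) \<noteq> r), c))"

definition Q8 :: "(bool \<times> qunit) monoid" where
  "Q8 = \<lparr>carrier = UNIV, monoid.mult = qmul, one = (False, QE)\<rparr>"

definition is_section_of :: "('a, 'c) monoid_scheme \<Rightarrow> ('b, 'd) monoid_scheme \<Rightarrow> bool" where
  "is_section_of H G \<longleftrightarrow>
     (\<exists>K N. subgroup K G \<and> N \<lhd> (G\<lparr>carrier := K\<rparr>) \<and> H \<cong> ((G\<lparr>carrier := K\<rparr>) Mod N))"

text \<open>u \<in> <v> abbreviates (u=1) or (u=v) or (u=v^2) or (u=v^3).\<close>
definition in_cyc :: "('a, 'c) monoid_scheme \<Rightarrow> 'a \<Rightarrow> 'a \<Rightarrow> bool" where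
  "in_cyc G u v \<longleftrightarrow> u = \<one>\<^bsub>G\<^esub> \<or> u = v \<or> u = v [^]\<^bsub>G\<^esub> (2::nat) \<or> u = v [^]\<^bsub>G\<^esub> (3::nat)"

definition sat_omega8 :: "('a, 'c) monoid_scheme \<Rightarrow> bool" where
  "sat_omega8 G \<longleftrightarrow>
     (\<forall>x :: nat \<Rightarrow> 'a. (\<forall>i\<le>8. x i \<in> carrier G) \<longrightarrow> (\<exists>i j. i < j \<and> j \<le> 8 \<and> x i = x j))"

definition sat_exp4 :: "('a, 'c) monoid_scheme \<Rightarrow> bool" where
  "sat_exp4 G \<longleftrightarrow> (\<forall>x\<in>carrier G. x [^]\<^bsub>G\<^esub> (4::nat) = \<one>\<^bsub>G\<^esub>)"

definition sat_id3 :: "('a, 'c) monoid_scheme \<Rightarrow> bool" where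
  "sat_id3 G \<longleftrightarrow> (\<forall>x1\<in>carrier G. \<forall>x2\<in>carrier G.
     in_cyc G x1 x2 \<or> in_cyc G x2 x1 \<or>
     (x1 [^]\<^bsub>G\<^esub> (2::nat)) \<otimes>\<^bsub>G\<^esub> (x2 [^]\<^bsub>G\<^esub> (2::nat)) = \<one>\<^bsub>G\<^esub>)"

definition sat_id4 :: "('a, 'c) monoid_scheme \<Rightarrow> bool" where
  "sat_id4 G \<longleftrightarrow> (\<forall>x1\<in>carrier G. \<forall>x2\<in>carrier G. \<forall>x3\<in>carrier G.
     in_cyc G x1 x2 \<or> in_cyc G x1 x3 \<or> in_cyc G x2 x1 \<or>
     in_cyc G x2 x3 \<or> in_cyc G x3 x1 \<or> in_cyc G x3 x2 \<or>
     x1 \<otimes>\<^bsub>G\<^esub> x2 = x3 \<or> x1 \<otimes>\<^bsub>G\<^esub> x2 = inv\<^bsub>G\<^esub> x3)"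

end

theory Submission
  imports Defs
begin

lemma qunit_UNIV: "(UNIV :: qunit set) = {QE,QI,QJ,QK}"
  using qunit.exhaust by auto

lemma Q8_UNIV: "(UNIV :: (bool \<times> qunit) set) =
  {(False,QE),(False,QI),(False,QJ),(False,QK),(True,QE),(True,QI),(True,QJ),(True,QK)}"
  using qunit.exhaust by auto

lemma Q8_card: "card (UNIV :: (bool \<times> qunit) set) = 8"
  unfolding Q8_UNIV by simp

lemma Q8_simps [simp]: "carrier Q8 = UNIV" "monoid.mult Q8 = qmul" "one Q8 = (False,QE)"
  by (simp_all add: Q8_def)

lemma qmul_assoc: "qmul (qmul x y) z = qmul x (qmul y z)"
  apply (cases x; cases y; cases z)
  subgoal for s1 u1 s2 u2 s3 u3
    by (cases u1; cases u2; cases u3; cases s1; cases s2; cases s3; simp add: qmul_def)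
  done

lemma group_Q8: "group Q8"
proof (rule groupI)
  fix x :: "bool \<times> qunit"
  show "\<exists>y\<in>carrier Q8. y \<otimes>\<^bsub>Q8\<^esub> x = \<one>\<^bsub>Q8\<^esub>"
    apply (cases x)
    subgoal for s u
      apply (rule bexI[where x="if u = QE then (s,QE) else (\<not>s,u)"])
      by (cases u; cases s; simp add: qmul_def) simp
    done
next
  fix x :: "bool \<times> qunit"
  show "\<one>\<^bsub>Q8\<^esub> \<otimes>\<^bsub>Q8\<^esub> x = x"
    by (cases x, simp add: qmul_def)
qed (simp_all add: qmul_assoc)

lemma (in monoid) pow2: "x \<in> carrier G \<Longrightarrow> x [^] (2::nat) = x \<otimes> x"
  by (simp add: numeral_2_eq_2)
lemma (in monoid) pow3: "x \<in> carrier G \<Longrightarrow> x [^] (3::nat) = x \<otimes> (x \<otimes> x)"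
  by (simp add: numeral_3_eq_3 m_assoc)
lemma (in monoid) pow4: "x \<in> carrier G \<Longrightarrow> x [^] (4::nat) = x \<otimes> (x \<otimes> (x \<otimes> x))"
  by (simp add: eval_nat_numeral m_assoc)

lemma Q8_omega8: "sat_omega8 Q8"
  unfolding sat_omega8_def
proof (intro allI impI)
  fix x :: "nat \<Rightarrow> bool \<times> qunit"
  have fin: "finite (UNIV :: (bool \<times> qunit) set)" unfolding Q8_UNIV by simp
  have "\<not> inj_on x {..8}"
  proof
    assume "inj_on x {..8}"
    hence "card (x ` {..8}) = 9" by (simp add: card_image)
    moreover have "card (x ` {..8}) \<le> 8" using card_mono[OF fin, of "x ` {..8}"] Q8_card by simp
    ultimately show False by simp
  qed
  then obtain i j where ij: "i \<le> 8" "j \<le> 8" "i \<noteq> j" "x i = x j" unfolding inj_on_def by auto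
  show "\<exists>i j. i < j \<and> j \<le> 8 \<and> x i = x j"
  proof (cases "i < j")
    case True thus ?thesis using ij by blast
  next
    case False thus ?thesis using ij by (intro exI[of _ j] exI[of _ i]) auto
  qed
qed

lemma Q8_exp4: "sat_exp4 Q8"
  unfolding sat_exp4_def
  apply (simp add: monoid.pow4[OF group.is_monoid[OF group_Q8]])
  apply (intro allI)
  subgoal for s u by (cases s; cases u; simp add: qmul_def)
  done

lemma in_cyc_Q8: "in_cyc Q8 u v \<longleftrightarrow> u = (False,QE) \<or> u = v \<or> u = qmul v v \<or> u = qmul v (qmul v v)"
  unfolding in_cyc_def
  by (simp add: monoid.pow2[OF group.is_monoid[OF group_Q8]] monoid.pow3[OF group.is_monoid[OF group_Q8]])

lemma inv_Q8: "inv\<^bsub>Q8\<^esub> (s,u) = (if u = QE then (s,QE) else (\<not>s,u))"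
  apply (rule group.inv_equality[OF group_Q8])
  by (cases u; cases s; simp add: qmul_def) simp_all

lemma id3_conc: "in_cyc Q8 (s1,u1) (s2,u2) \<or> in_cyc Q8 (s2,u2) (s1,u1) \<or>
     ((s1,u1) [^]\<^bsub>Q8\<^esub> (2::nat)) \<otimes>\<^bsub>Q8\<^esub> ((s2,u2) [^]\<^bsub>Q8\<^esub> (2::nat)) = \<one>\<^bsub>Q8\<^esub>"
  unfolding in_cyc_Q8 monoid.pow2[OF group.is_monoid[OF group_Q8], simplified]
  by (cases s1; cases u1; cases s2; cases u2; simp add: qmul_def)

lemma Q8_id3: "sat_id3 Q8"
  unfolding sat_id3_def
proof (intro ballI)
  fix x y :: "bool \<times> qunit"
  show "in_cyc Q8 x y \<or> in_cyc Q8 y x \<or> (x [^]\<^bsub>Q8\<^esub> (2::nat)) \<otimes>\<^bsub>Q8\<^esub> (y [^]\<^bsub>Q8\<^esub> (2::nat)) = \<one>\<^bsub>Q8\<^esub>"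
    using id3_conc[of "fst x" "snd x" "fst y" "snd y"] by simp
qed

lemma id4_conc: "in_cyc Q8 (s1,u1) (s2,u2) \<or> in_cyc Q8 (s1,u1) (s3,u3) \<or> in_cyc Q8 (s2,u2) (s1,u1) \<or>
     in_cyc Q8 (s2,u2) (s3,u3) \<or> in_cyc Q8 (s3,u3) (s1,u1) \<or> in_cyc Q8 (s3,u3) (s2,u2) \<or>
     (s1,u1) \<otimes>\<^bsub>Q8\<^esub> (s2,u2) = (s3,u3) \<or> (s1,u1) \<otimes>\<^bsub>Q8\<^esub> (s2,u2) = inv\<^bsub>Q8\<^esub> (s3,u3)"
  unfolding in_cyc_Q8 inv_Q8
  by (cases u1; cases u2; cases u3; cases s1; cases s2; cases s3; simp add: qmul_def)

lemma Q8_id4: "sat_id4 Q8"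
  unfolding sat_id4_def
proof (intro ballI)
  fix x y z :: "bool \<times> qunit"
  show "in_cyc Q8 x y \<or> in_cyc Q8 x z \<or> in_cyc Q8 y x \<or>
     in_cyc Q8 y z \<or> in_cyc Q8 z x \<or> in_cyc Q8 z y \<or>
     x \<otimes>\<^bsub>Q8\<^esub> y = z \<or> x \<otimes>\<^bsub>Q8\<^esub> y = inv\<^bsub>Q8\<^esub> z"
    using id4_conc[of "fst x" "snd x" "fst y" "snd y" "fst z" "snd z"] by simp
qed


definition cy :: "('a, 'c) monoid_scheme \<Rightarrow> 'a \<Rightarrow> 'a \<Rightarrow> bool" where
  "cy G u v \<longleftrightarrow> u = \<one>\<^bsub>G\<^esub> \<or> u = v \<or> u = v \<otimes>\<^bsub>G\<^esub> v \<or> u = v \<otimes>\<^bsub>G\<^esub> (v \<otimes>\<^bsub>G\<^esub> v)"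

lemma section_from_hom:
  assumes K: "subgroup K Q8" and G: "group G" and h: "h \<in> hom (Q8\<lparr>carrier := K\<rparr>) G"
    and s: "h ` K = carrier G"
  shows "is_section_of G Q8"
proof -
  let ?H = "Q8\<lparr>carrier := K\<rparr>"
  have gH: "group ?H" using subgroup.subgroup_is_group[OF K group_Q8] .
  interpret gh: group_hom ?H G h using gH G h by (simp add: group_hom_def group_hom_axioms_def)
  have "?H Mod kernel ?H G h \<cong> G" using gh.FactGroup_iso s by simp
  hence "G \<cong> ?H Mod kernel ?H G h"
    using group.iso_sym[OF normal.factorgroup_is_group[OF gh.normal_kernel]] by blast
  then show ?thesis unfolding is_section_of_def using K gh.normal_kernel by blast
qed

locale dg = group G for G :: "('a, 'c) monoid_scheme" (structure) +
  assumes E: "x \<in> carrier G \<Longrightarrow> x \<otimes> (x \<otimes> (x \<otimes> x)) = \<one>"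
  and I3: "x \<in> carrier G \<Longrightarrow> y \<in> carrier G \<Longrightarrow> \<not> cy G x y \<Longrightarrow> \<not> cy G y x \<Longrightarrow> x \<otimes> x \<otimes> (y \<otimes> y) = \<one>"
  and I4: "x \<in> carrier G \<Longrightarrow> y \<in> carrier G \<Longrightarrow> z \<in> carrier G \<Longrightarrow>
     \<not> cy G x y \<Longrightarrow> \<not> cy G x z \<Longrightarrow> \<not> cy G y x \<Longrightarrow> \<not> cy G y z \<Longrightarrow> \<not> cy G z x \<Longrightarrow> \<not> cy G z y \<Longrightarrow>
     x \<otimes> y = z \<or> x \<otimes> y = inv z"
  and O8: "sat_omega8 G"
begin

lemma E': "x \<in> carrier G \<Longrightarrow> y \<in> carrier G \<Longrightarrow> x \<otimes> (x \<otimes> (x \<otimes> (x \<otimes> y))) = y"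
  using E by (metis m_assoc m_closed l_one)

lemma inv4: "x \<in> carrier G \<Longrightarrow> inv x = x \<otimes> (x \<otimes> x)"
  using E inv_equality by (metis m_assoc m_closed inv_comm)

lemma cy_one: "cy G \<one> v" by (simp add: cy_def)

lemma I3': "x \<in> carrier G \<Longrightarrow> y \<in> carrier G \<Longrightarrow> \<not> cy G x y \<Longrightarrow> \<not> cy G y x \<Longrightarrow> x \<otimes> x = y \<otimes> y"
proof -
  assume a: "x \<in> carrier G" "y \<in> carrier G" "\<not> cy G x y" "\<not> cy G y x"
  have "x \<otimes> x \<otimes> (y \<otimes> y) = \<one>" using I3 a by blast
  hence "x \<otimes> x = inv (y \<otimes> y)" using a by (metis inv_equality inv_comm m_closed inv_inv)
  also have "\<dots> = y \<otimes> y" using a inv4 by (metis E inv_equality m_assoc m_closed)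
  finally show ?thesis .
qed

lemma cyclic_case:
  assumes g: "g \<in> carrier G" and all: "\<forall>x\<in>carrier G. cy G x g"
  shows "\<exists>K h. subgroup K Q8 \<and> h \<in> hom (Q8\<lparr>carrier := K\<rparr>) G \<and> h ` K = carrier G"
proof -
  define K where "K = {x :: bool \<times> qunit. snd x = QE \<or> snd x = QI}"
  define h where "h = (\<lambda>x :: bool \<times> qunit. if x = (False,QE) then \<one> else if x = (False,QI) then g
     else if x = (True,QE) then g \<otimes> g else g \<otimes> (g \<otimes> g))"
  have sg: "subgroup K Q8"
  proof (rule group.subgroupI[OF group_Q8])
    show "K \<subseteq> carrier Q8" by simp
    show "K \<noteq> {}" unfolding K_def by auto
    fix a assume "a \<in> K" thus "inv\<^bsub>Q8\<^esub> a \<in> K"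
      by (cases a) (auto simp: K_def inv_Q8)
  next
    fix a b assume "a \<in> K" "b \<in> K" thus "a \<otimes>\<^bsub>Q8\<^esub> b \<in> K"
      by (cases a; cases b) (auto simp: K_def qmul_def)
  qed
  have r1: "g \<otimes> (g \<otimes> (g \<otimes> g)) = \<one>" using E g by blast
  have r2: "\<And>y. y \<in> carrier G \<Longrightarrow> g \<otimes> (g \<otimes> (g \<otimes> (g \<otimes> y))) = y" using E' g by blast
  have hc: "\<And>x. h x \<in> carrier G" unfolding h_def using g by auto
  have hm: "\<And>x y. x \<in> K \<Longrightarrow> y \<in> K \<Longrightarrow> h (qmul x y) = h x \<otimes> h y"
  proof -
    fix x y :: "bool \<times> qunit" assume "x \<in> K" "y \<in> K"
    then obtain s1 u1 s2 u2 where xy: "x = (s1,u1)" "y = (s2,u2)" "u1 = QE \<or> u1 = QI" "u2 = QE \<or> u2 = QI"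
      unfolding K_def by (cases x; cases y) auto
    show "h (qmul x y) = h x \<otimes> h y"
      using xy(3,4) unfolding xy(1,2)
      by (cases s1; cases s2; elim disjE; simp add: qmul_def h_def m_assoc g r1 r2)
  qed
  have hom: "h \<in> hom (Q8\<lparr>carrier := K\<rparr>) G"
    unfolding hom_def using hc hm by auto
  have "h ` K = carrier G"
  proof
    show "h ` K \<subseteq> carrier G" using hc by auto
    show "carrier G \<subseteq> h ` K"
    proof
      fix x assume "x \<in> carrier G"
      hence "cy G x g" using all by blast
      hence "x = h (False,QE) \<or> x = h (False,QI) \<or> x = h (True,QE) \<or> x = h (True,QI)"
        unfolding cy_def h_def by auto
      moreover have "(False,QE) \<in> K" "(False,QI) \<in> K" "(True,QE) \<in> K" "(True,QI) \<in> K"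
        unfolding K_def by auto
      ultimately show "x \<in> h ` K" by blast
    qed
  qed
  thus ?thesis using sg hom by blast
qed

lemma noncyc:
  assumes nc: "\<not> (\<exists>g\<in>carrier G. \<forall>x\<in>carrier G. cy G x g)"
  shows "\<exists>a\<in>carrier G. \<exists>b\<in>carrier G. \<not> cy G a b \<and> \<not> cy G b a"
proof (rule ccontr)
  assume "\<not> ?thesis"
  hence P: "\<And>a b. a \<in> carrier G \<Longrightarrow> b \<in> carrier G \<Longrightarrow> cy G a b \<or> cy G b a" by blast
  show False
  proof (cases "\<exists>g\<in>carrier G. g \<otimes> g \<noteq> \<one>")
    case True
    then obtain g where g: "g \<in> carrier G" "g \<otimes> g \<noteq> \<one>" by blast
    have "\<forall>x\<in>carrier G. cy G x g"
    proof
      fix x assume x: "x \<in> carrier G"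
      show "cy G x g"
      proof (cases "cy G g x")
        case False thus ?thesis using P x g by blast
      next
        case True
        have ng1: "g \<noteq> \<one>" using g by auto
        have ng2: "g \<noteq> x \<otimes> x"
        proof
          assume "g = x \<otimes> x"
          hence "g \<otimes> g = x \<otimes> (x \<otimes> (x \<otimes> x))" using x by (simp add: m_assoc)
          thus False using E x g by simp
        qed
        have "g = x \<or> g = x \<otimes> (x \<otimes> x)" using True ng1 ng2 unfolding cy_def by blast
        thus ?thesis
        proof
          assume "g = x" thus ?thesis by (simp add: cy_def)
        next
          assume gx: "g = x \<otimes> (x \<otimes> x)"
          have "g \<otimes> (g \<otimes> g) = x \<otimes> (x \<otimes> (x \<otimes> (x \<otimes> (x \<otimes> (x \<otimes> (x \<otimes> (x \<otimes> x)))))))"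
            using x by (simp add: gx m_assoc)
          also have "\<dots> = x" using x E' by simp
          finally show ?thesis unfolding cy_def by simp
        qed
      qed
    qed
    thus False using nc g by blast
  next
    case False
    hence sq: "\<And>x. x \<in> carrier G \<Longrightarrow> x \<otimes> x = \<one>" by blast
    show False
    proof (cases "\<exists>g\<in>carrier G. g \<noteq> \<one>")
      case True
      then obtain g where g: "g \<in> carrier G" "g \<noteq> \<one>" by blast
      have "\<forall>x\<in>carrier G. cy G x g"
      proof
        fix x assume x: "x \<in> carrier G"
        have "cy G x g \<or> cy G g x" using P x g by blast
        moreover have "cy G g x \<Longrightarrow> g = x" using g sq[OF x] x unfolding cy_def by auto
        ultimately show "cy G x g" unfolding cy_def by auto
      qed
      thus False using nc g by blast
    next
      case False
      hence "\<forall>x\<in>carrier G. cy G x \<one>" by (auto simp: cy_def)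
      thus False using nc by blast
    qed
  qed
qed

lemma klein_comm:
  assumes ab: "a \<in> carrier G" "b \<in> carrier G" "\<not> cy G a b" "\<not> cy G b a"
    and aa: "a \<otimes> a = \<one>" and bb: "b \<otimes> b = \<one>"
  shows "b \<otimes> a = a \<otimes> b"
proof -
  define c where "c = a \<otimes> b"
  have c: "c \<in> carrier G" using ab c_def by simp
  have a1: "a \<noteq> \<one>" "a \<noteq> b" "b \<noteq> \<one>" using ab by (auto simp: cy_def)
  have aa': "\<And>y. y \<in> carrier G \<Longrightarrow> a \<otimes> (a \<otimes> y) = y" using aa ab by (metis m_assoc l_one)
  have bb': "\<And>y. y \<in> carrier G \<Longrightarrow> b \<otimes> (b \<otimes> y) = y" using bb ab by (metis m_assoc l_one)
  note W = m_assoc aa aa' bb bb' ab(1,2)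
  have ac: "a \<noteq> c" using ab a1 by (simp add: c_def)
  have c1: "c \<noteq> \<one>"
  proof
    assume "c = \<one>"
    hence "a \<otimes> c = a" using ab by simp
    thus False using a1 ab by (simp add: c_def W)
  qed
  have cc: "c \<otimes> c = \<one>"
  proof (rule ccontr)
    assume ncc: "c \<otimes> c \<noteq> \<one>"
    have "\<not> cy G a c"
    proof
      assume "cy G a c"
      moreover have "a \<noteq> c \<otimes> c"
      proof
        assume e: "a = c \<otimes> c"
        hence "a \<otimes> a = a \<otimes> (c \<otimes> c)" by simp
        hence "\<one> = b \<otimes> (a \<otimes> b)" by (simp add: W c_def)
        hence "b \<otimes> \<one> = b \<otimes> (b \<otimes> (a \<otimes> b))" by simp
        hence "b = a \<otimes> b" by (simp add: W)
        thus False using a1 ab by simp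
      qed
      moreover have "a \<noteq> c \<otimes> (c \<otimes> c)"
      proof
        assume e: "a = c \<otimes> (c \<otimes> c)"
        hence "c \<otimes> a = c \<otimes> (c \<otimes> (c \<otimes> c))" by simp
        hence "a \<otimes> (b \<otimes> a) = \<one>" using E[OF c] by (simp add: W c_def)
        hence "a \<otimes> (a \<otimes> (b \<otimes> a)) = a" using ab by simp
        hence "b \<otimes> a = a" by (simp add: W)
        thus False using a1 ab by simp
      qed
      ultimately show False using a1 ac unfolding cy_def by blast
    qed
    moreover have "\<not> cy G c a"
    proof
      assume "cy G c a"
      thus False using aa ab c1 ac unfolding cy_def by (auto simp add: m_assoc[symmetric])
    qed
    ultimately have "a \<otimes> a = c \<otimes> c" using I3' ab c by blast
    thus False using aa ncc by simp
  qed
  hence "a \<otimes> (a \<otimes> (b \<otimes> (a \<otimes> b))) = a" using ab by (simp add: c_def m_assoc)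
  hence "b \<otimes> (b \<otimes> (a \<otimes> b)) = b \<otimes> a" by (simp add: W)
  thus ?thesis by (simp add: W)
qed

lemma klein_case:
  assumes ab: "a \<in> carrier G" "b \<in> carrier G" "\<not> cy G a b" "\<not> cy G b a"
    and aa: "a \<otimes> a = \<one>"
  shows "\<exists>K h. subgroup K Q8 \<and> h \<in> hom (Q8\<lparr>carrier := K\<rparr>) G \<and> h ` K = carrier G"
proof -
  have bb: "b \<otimes> b = \<one>" using I3'[OF ab] aa by simp
  have comm: "b \<otimes> a = a \<otimes> b" using klein_comm[OF ab aa bb] .
  have a1: "a \<noteq> \<one>" "a \<noteq> b" "b \<noteq> \<one>" using ab by (auto simp: cy_def)
  have aa': "\<And>y. y \<in> carrier G \<Longrightarrow> a \<otimes> (a \<otimes> y) = y" using aa ab by (metis m_assoc l_one)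
  have bb': "\<And>y. y \<in> carrier G \<Longrightarrow> b \<otimes> (b \<otimes> y) = y" using bb ab by (metis m_assoc l_one)
  have comm': "\<And>y. y \<in> carrier G \<Longrightarrow> b \<otimes> (a \<otimes> y) = a \<otimes> (b \<otimes> y)" using comm ab by (metis m_assoc)
  note W = m_assoc aa aa' bb bb' ab(1,2) comm comm'
  have surj: "x = \<one> \<or> x = a \<or> x = b \<or> x = a \<otimes> b" if x: "x \<in> carrier G" for x
  proof (rule ccontr)
    assume "\<not> ?thesis"
    hence nx: "x \<noteq> \<one>" "x \<noteq> a" "x \<noteq> b" "x \<noteq> a \<otimes> b" by auto
    have xx: "x \<otimes> x = \<one>"
    proof (rule ccontr)
      assume nxx: "x \<otimes> x \<noteq> \<one>"
      have nxa: "\<not> cy G x a" using nx aa ab unfolding cy_def by (auto simp: W)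
      have nax: "\<not> cy G a x"
      proof
        assume "cy G a x"
        moreover have "a \<noteq> x \<otimes> (x \<otimes> x)"
        proof
          assume "a = x \<otimes> (x \<otimes> x)"
          hence "x \<otimes> a = \<one>" using E[OF x] by simp
          hence "x \<otimes> a \<otimes> a = a" using ab by simp
          hence "x = a" using x ab by (simp add: W)
          thus False using nx by simp
        qed
        moreover have "a \<noteq> x \<otimes> x"
        proof
          assume axx: "a = x \<otimes> x"
          have "\<not> cy G x b" using nx bb ab unfolding cy_def by (auto simp: W)
          moreover have "\<not> cy G b x"
          proof
            assume "cy G b x"
            moreover have "b \<noteq> x \<otimes> (x \<otimes> x)"
            proof
              assume "b = x \<otimes> (x \<otimes> x)"
              hence "x \<otimes> b = \<one>" using E[OF x] by simp
              hence "x \<otimes> b \<otimes> b = b" using ab by simp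
              hence "x = b" using x ab by (simp add: W)
              thus False using nx by simp
            qed
            ultimately show False using a1 nx axx unfolding cy_def by auto
          qed
          ultimately have "x \<otimes> x = b \<otimes> b" using I3' x ab by blast
          thus False using nxx bb by simp
        qed
        ultimately show False using a1 nx unfolding cy_def by auto
      qed
      have "x \<otimes> x = a \<otimes> a" using I3' x ab nxa nax by blast
      thus False using nxx aa by simp
    qed
    have xx': "x \<otimes> (x \<otimes> x) = x" using xx x by (simp add: m_assoc[symmetric])
    have "\<not> cy G x a" "\<not> cy G a x" "\<not> cy G x b" "\<not> cy G b x"
      using nx a1 aa bb xx xx' ab x unfolding cy_def by (auto simp: W)
    hence "a \<otimes> b = x \<or> a \<otimes> b = inv x" using I4[OF ab(1,2) x] ab by blast
    moreover have "inv x = x" using inv4[OF x] xx' by simp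
    ultimately show False using nx by auto
  qed
  define h where "h = (\<lambda>x :: bool \<times> qunit. case snd x of QE \<Rightarrow> \<one> | QI \<Rightarrow> a | QJ \<Rightarrow> b | QK \<Rightarrow> a \<otimes> b)"
  have hc: "\<And>x. h x \<in> carrier G" unfolding h_def using ab by (auto split: qunit.splits)
  have hm: "h (qmul x y) = h x \<otimes> h y" for x y
  proof -
    obtain s1 u1 s2 u2 where xy: "x = (s1,u1)" "y = (s2,u2)" by (cases x; cases y) auto
    show ?thesis unfolding xy
      by (cases s1; cases s2; cases u1; cases u2; simp add: qmul_def h_def W)
  qed
  have hom: "h \<in> hom (Q8\<lparr>carrier := carrier Q8\<rparr>) G"
    unfolding hom_def using hc hm by auto
  have "h ` carrier Q8 = carrier G"
  proof
    show "h ` carrier Q8 \<subseteq> carrier G" using hc by auto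
    show "carrier G \<subseteq> h ` carrier Q8"
    proof
      fix x assume "x \<in> carrier G"
      hence "x = h (False,QE) \<or> x = h (False,QI) \<or> x = h (False,QJ) \<or> x = h (False,QK)"
        using surj unfolding h_def by auto
      thus "x \<in> h ` carrier Q8" by auto
    qed
  qed
  thus ?thesis using hom group.subgroup_self[OF group_Q8] by blast
qed

lemma cy_sym4:
  assumes x: "x \<in> carrier G" and y: "y \<in> carrier G" and c: "cy G x y" and xx: "x \<otimes> x \<noteq> \<one>"
  shows "cy G y x"
proof -
  have "x \<noteq> \<one>" using xx x by auto
  moreover have "x \<noteq> y \<otimes> y"
  proof
    assume "x = y \<otimes> y"
    hence "x \<otimes> x = y \<otimes> (y \<otimes> (y \<otimes> y))" using y by (simp add: m_assoc)
    thus False using E y xx by simp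
  qed
  ultimately have "x = y \<or> x = y \<otimes> (y \<otimes> y)" using c unfolding cy_def by blast
  thus ?thesis
  proof
    assume "x = y" thus ?thesis by (simp add: cy_def)
  next
    assume gx: "x = y \<otimes> (y \<otimes> y)"
    have "x \<otimes> (x \<otimes> x) = y \<otimes> (y \<otimes> (y \<otimes> (y \<otimes> (y \<otimes> (y \<otimes> (y \<otimes> (y \<otimes> y)))))))"
      using y by (simp add: gx m_assoc)
    also have "\<dots> = y" using y E' by simp
    finally show ?thesis unfolding cy_def by simp
  qed
qed

lemma q8_case:
  assumes ab: "a \<in> carrier G" "b \<in> carrier G" "\<not> cy G a b" "\<not> cy G b a"
    and z: "a \<otimes> a \<noteq> \<one>"
  shows "\<exists>K h. subgroup K Q8 \<and> h \<in> hom (Q8\<lparr>carrier := K\<rparr>) G \<and> h ` K = carrier G"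
proof -
  have aabb: "b \<otimes> b = a \<otimes> a" using I3'[OF ab] by simp
  have nb: "b \<noteq> \<one>" "b \<noteq> a" "b \<noteq> a \<otimes> a" "b \<noteq> a \<otimes> (a \<otimes> a)" using ab(4) unfolding cy_def by auto
  have na: "a \<noteq> \<one>" "a \<noteq> b" using ab(3) unfolding cy_def by auto
  have a4: "a \<otimes> (a \<otimes> (a \<otimes> a)) = \<one>" using E ab by blast
  have a4': "\<And>y. y \<in> carrier G \<Longrightarrow> a \<otimes> (a \<otimes> (a \<otimes> (a \<otimes> y))) = y" using E' ab by blast
  have bb': "\<And>y. y \<in> carrier G \<Longrightarrow> b \<otimes> (b \<otimes> y) = a \<otimes> (a \<otimes> y)" using aabb ab by (metis m_assoc)
  note W = m_assoc a4 a4' aabb bb' ab(1,2)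
  have bz: "b \<otimes> (a \<otimes> a) = a \<otimes> (a \<otimes> b)"
    using ab by (metis aabb m_assoc)
  define d where "d = a \<otimes> (a \<otimes> (a \<otimes> b))"
  have d: "d \<in> carrier G" using ab d_def by simp
  have ad: "a \<otimes> d = b" by (simp add: d_def W)
  have nda: "\<not> cy G d a"
  proof
    assume "cy G d a"
    hence "a \<otimes> d = a \<otimes> \<one> \<or> a \<otimes> d = a \<otimes> a \<or> a \<otimes> d = a \<otimes> (a \<otimes> a) \<or> a \<otimes> d = a \<otimes> (a \<otimes> (a \<otimes> a))"
      unfolding cy_def by auto
    thus False using nb ab unfolding ad by (simp add: W)
  qed
  have ndb: "\<not> cy G d b"
  proof
    assume "cy G d b"
    hence "a \<otimes> d = a \<otimes> \<one> \<or> a \<otimes> d = a \<otimes> b \<or> a \<otimes> d = a \<otimes> (b \<otimes> b) \<or> a \<otimes> d = a \<otimes> (b \<otimes> (b \<otimes> b))"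
      unfolding cy_def by auto
    hence "b = a \<or> b = a \<otimes> b \<or> b = a \<otimes> (a \<otimes> a) \<or> b = a \<otimes> (a \<otimes> (a \<otimes> b))"
      unfolding ad using ab by (simp add: W bz)
    moreover have "b \<noteq> a \<otimes> b" using na ab by simp
    moreover have "b \<noteq> a \<otimes> (a \<otimes> (a \<otimes> b))"
    proof
      assume "b = a \<otimes> (a \<otimes> (a \<otimes> b))"
      hence "\<one> \<otimes> b = (a \<otimes> (a \<otimes> a)) \<otimes> b" using ab by (simp add: m_assoc)
      hence "\<one> = a \<otimes> (a \<otimes> a)" using ab by (metis right_cancel m_closed one_closed)
      hence "a \<otimes> \<one> = \<one>" using a4 by simp
      thus False using na ab by simp
    qed
    ultimately show False using nb by blast
  qed
  have nad: "\<not> cy G a d" using cy_sym4[OF ab(1) d] nda z by blast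
  have bsq: "b \<otimes> b \<noteq> \<one>" using z aabb by simp
  have nbd: "\<not> cy G b d" using cy_sym4[OF ab(2) d] ndb bsq by blast
  have "a \<otimes> b = d \<or> a \<otimes> b = inv d" using I4[OF ab(1,2) d ab(3) nad ab(4) nbd nda ndb] .
  moreover have "a \<otimes> b \<noteq> d"
  proof
    assume "a \<otimes> b = d"
    hence "b = a \<otimes> (a \<otimes> b)" using ab unfolding d_def by simp
    hence "\<one> \<otimes> b = (a \<otimes> a) \<otimes> b" using ab by (simp add: m_assoc)
    hence "\<one> = a \<otimes> a" using ab by (metis right_cancel m_closed one_closed)
    thus False using z by simp
  qed
  moreover have "inv d = b \<otimes> (b \<otimes> (b \<otimes> a))"
  proof -
    have "inv d = inv b \<otimes> inv (a \<otimes> (a \<otimes> a))" unfolding d_def using ab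
      by (simp add: inv_mult_group m_assoc[symmetric])
    moreover have "inv (a \<otimes> (a \<otimes> a)) = a" using ab a4 by (metis inv_equality m_closed inv_comm m_assoc)
    ultimately show ?thesis using inv4[OF ab(2)] ab by (simp add: m_assoc)
  qed
  ultimately have "a \<otimes> b = b \<otimes> (b \<otimes> (b \<otimes> a))" by simp
  also have "b \<otimes> (b \<otimes> (b \<otimes> a)) = a \<otimes> (a \<otimes> (b \<otimes> a))" using ab by (intro bb') simp
  finally have "a \<otimes> (a \<otimes> (a \<otimes> b)) = a \<otimes> (a \<otimes> (a \<otimes> (a \<otimes> (b \<otimes> a))))" using ab by (simp add: m_assoc)
  hence ba: "b \<otimes> a = a \<otimes> (a \<otimes> (a \<otimes> b))" using a4' ab by simp
  have ba': "\<And>y. y \<in> carrier G \<Longrightarrow> b \<otimes> (a \<otimes> y) = a \<otimes> (a \<otimes> (a \<otimes> (b \<otimes> y)))"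
    using ba ab by (metis m_assoc m_closed)
  note W2 = W ba ba'
  define e where "e = (\<lambda>u. case u of QE \<Rightarrow> \<one> | QI \<Rightarrow> a | QJ \<Rightarrow> b | QK \<Rightarrow> a \<otimes> b)"
  define h where "h = (\<lambda>x :: bool \<times> qunit. if fst x then a \<otimes> (a \<otimes> e (snd x)) else e (snd x))"
  have hc: "\<And>x. h x \<in> carrier G" unfolding h_def e_def using ab by (auto split: qunit.splits)
  have hm: "h (qmul x y) = h x \<otimes> h y" for x y
  proof -
    obtain s1 u1 s2 u2 where xy: "x = (s1,u1)" "y = (s2,u2)" by (cases x; cases y) auto
    show ?thesis unfolding xy
      by (cases s1; cases s2; cases u1; cases u2; simp add: qmul_def h_def e_def W2)
  qed
  have homQ: "h \<in> hom Q8 G" unfolding hom_def using hc hm by auto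
  have hom: "h \<in> hom (Q8\<lparr>carrier := carrier Q8\<rparr>) G" unfolding hom_def using hc hm by auto
  interpret gh: group_hom Q8 G h using group_Q8 homQ by (simp add: group_hom_def group_hom_axioms_def is_group)
  have "kernel Q8 G h = {\<one>\<^bsub>Q8\<^esub>}"
  proof -
    have k: "q = (False,QE)" if hq: "h q = \<one>" for q
    proof -
      obtain s u where q: "q = (s,u)" by (cases q)
      show ?thesis
      proof (cases s)
        case False
        show ?thesis
        proof (cases u)
          case QE thus ?thesis using q False by simp
        next
          case QI thus ?thesis using hq q False na by (simp add: h_def e_def)
        next
          case QJ thus ?thesis using hq q False nb by (simp add: h_def e_def)
        next
          case QK
          hence e: "a \<otimes> b = \<one>" using hq q False by (simp add: h_def e_def)
          have "b = a \<otimes> (a \<otimes> (a \<otimes> (a \<otimes> b)))" using a4' ab by simp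
          also have "\<dots> = a \<otimes> (a \<otimes> a)" using e ab by simp
          finally show ?thesis using nb by simp
        qed
      next
        case True
        show ?thesis
        proof (cases u)
          case QE thus ?thesis using hq q True z ab by (simp add: h_def e_def)
        next
          case QI
          hence e: "a \<otimes> (a \<otimes> a) = \<one>" using hq q True by (simp add: h_def e_def)
          have "a = a \<otimes> (a \<otimes> (a \<otimes> a))" using e ab by simp
          thus ?thesis using a4 na by simp
        next
          case QJ
          hence e: "a \<otimes> (a \<otimes> b) = \<one>" using hq q True by (simp add: h_def e_def)
          have "b = a \<otimes> (a \<otimes> (a \<otimes> (a \<otimes> b)))" using a4' ab by simp
          also have "\<dots> = a \<otimes> a" using e ab by simp
          finally show ?thesis using nb by simp
        next
          case QK
          hence e: "a \<otimes> (a \<otimes> (a \<otimes> b)) = \<one>" using hq q True by (simp add: h_def e_def)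
          have "b = a \<otimes> (a \<otimes> (a \<otimes> (a \<otimes> b)))" using a4' ab by simp
          also have "\<dots> = a" using e ab by simp
          finally show ?thesis using nb by simp
        qed
      qed
    qed
    have h1: "h (False,QE) = \<one>" by (simp add: h_def e_def)
    show ?thesis
    proof
      show "kernel Q8 G h \<subseteq> {\<one>\<^bsub>Q8\<^esub>}"
      proof
        fix q assume "q \<in> kernel Q8 G h"
        hence "h q = \<one>" by (simp add: kernel_def)
        hence "q = (False,QE)" by (rule k)
        thus "q \<in> {\<one>\<^bsub>Q8\<^esub>}" by simp
      qed
      show "{\<one>\<^bsub>Q8\<^esub>} \<subseteq> kernel Q8 G h" unfolding kernel_def using h1 by simp
    qed
  qed
  hence inj: "inj h" using gh.trivial_ker_imp_inj by simp
  have "h ` carrier Q8 = carrier G"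
  proof
    show "h ` carrier Q8 \<subseteq> carrier G" using hc by auto
    show "carrier G \<subseteq> h ` carrier Q8"
    proof
      fix x assume x: "x \<in> carrier G"
      show "x \<in> h ` carrier Q8"
      proof (rule ccontr)
        assume nx: "x \<notin> h ` carrier Q8"
        define qs where "qs = [(False,QE),(False,QI),(False,QJ),(False,QK),(True,QE),(True,QI),(True,QJ),(True,QK)]"
        have dq: "distinct qs" "length qs = 8" unfolding qs_def by simp_all
        define f where "f = (\<lambda>i. if i < 8 then h (qs ! i) else x)"
        have fc: "\<forall>i\<le>8. f i \<in> carrier G" unfolding f_def using hc x by auto
        have O8f: "(\<forall>i\<le>8. f i \<in> carrier G) \<longrightarrow> (\<exists>i j. i < j \<and> j \<le> 8 \<and> f i = f j)"
          using O8 unfolding sat_omega8_def by (rule spec)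
        have "\<exists>i j. i < j \<and> j \<le> 8 \<and> f i = f j" using O8f fc by (rule mp)
        then obtain i j where ij: "i < j" "j \<le> 8" "f i = f j" by blast
        show False
        proof (cases "j = 8")
          case True
          hence "h (qs ! i) = x" using ij unfolding f_def by simp
          thus False using nx by auto
        next
          case False
          hence "h (qs ! i) = h (qs ! j)" using ij unfolding f_def by simp
          hence "qs ! i = qs ! j" using inj unfolding inj_def by blast
          moreover have "i < length qs" "j < length qs" using dq(2) ij False by auto
          ultimately have "i = j" using nth_eq_iff_index_eq[OF dq(1)] by blast
          thus False using ij by simp
        qed
      qed
    qed
  qed
  thus ?thesis using hom group.subgroup_self[OF group_Q8] by blast
qed

lemma main_hom: "\<exists>K h. subgroup K Q8 \<and> h \<in> hom (Q8\<lparr>carrier := K\<rparr>) G \<and> h ` K = carrier G"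
proof (cases "\<exists>g\<in>carrier G. \<forall>x\<in>carrier G. cy G x g")
  case True thus ?thesis using cyclic_case by blast
next
  case False
  then obtain a b where ab: "a \<in> carrier G" "b \<in> carrier G" "\<not> cy G a b" "\<not> cy G b a"
    using noncyc by blast
  show ?thesis
  proof (cases "a \<otimes> a = \<one>")
    case True thus ?thesis using klein_case[OF ab] by blast
  next
    case False thus ?thesis using q8_case[OF ab] by blast
  qed
qed

end

lemma in_cyc_cy: "group G \<Longrightarrow> v \<in> carrier G \<Longrightarrow> in_cyc G u v = cy G u v"
  unfolding in_cyc_def cy_def
  by (simp add: monoid.pow2[OF group.is_monoid] monoid.pow3[OF group.is_monoid])

lemma dg_intro:
  assumes G: "group G" and o: "sat_omega8 G" and e: "sat_exp4 G" and i3: "sat_id3 G" and i4: "sat_id4 G"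
  shows "dg G"
proof -
  interpret group G by (rule G)
  show ?thesis
  proof (unfold_locales)
    fix x assume "x \<in> carrier G"
    thus "x \<otimes>\<^bsub>G\<^esub> (x \<otimes>\<^bsub>G\<^esub> (x \<otimes>\<^bsub>G\<^esub> x)) = \<one>\<^bsub>G\<^esub>" using e unfolding sat_exp4_def by (simp add: pow4)
  next
    fix x y assume "x \<in> carrier G" "y \<in> carrier G" "\<not> cy G x y" "\<not> cy G y x"
    thus "x \<otimes>\<^bsub>G\<^esub> x \<otimes>\<^bsub>G\<^esub> (y \<otimes>\<^bsub>G\<^esub> y) = \<one>\<^bsub>G\<^esub>" using i3 unfolding sat_id3_def
      by (simp add: in_cyc_cy[OF G] pow2) blast
  next
    fix x y z assume "x \<in> carrier G" "y \<in> carrier G" "z \<in> carrier G"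
      "\<not> cy G x y" "\<not> cy G x z" "\<not> cy G y x" "\<not> cy G y z" "\<not> cy G z x" "\<not> cy G z y"
    thus "x \<otimes>\<^bsub>G\<^esub> y = z \<or> x \<otimes>\<^bsub>G\<^esub> y = inv\<^bsub>G\<^esub> z" using i4 unfolding sat_id4_def
      by (simp add: in_cyc_cy[OF G]) blast
  next
    show "sat_omega8 G" by (rule o)
  qed
qed

theorem proposition2:
  shows "group Q8 \<and> sat_omega8 Q8 \<and> sat_exp4 Q8 \<and> sat_id3 Q8 \<and> sat_id4 Q8 \<and>
    (\<forall>G :: 'a monoid. group G \<and> sat_omega8 G \<and> sat_exp4 G \<and> sat_id3 G \<and> sat_id4 G
        \<longrightarrow> is_section_of G Q8)"
proof (intro conjI allI impI)
  show "group Q8" by (rule group_Q8)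
  show "sat_omega8 Q8" by (rule Q8_omega8)
  show "sat_exp4 Q8" by (rule Q8_exp4)
  show "sat_id3 Q8" by (rule Q8_id3)
  show "sat_id4 Q8" by (rule Q8_id4)
next
  fix G :: "'a monoid"
  assume a: "group G \<and> sat_omega8 G \<and> sat_exp4 G \<and> sat_id3 G \<and> sat_id4 G"
  hence "dg G" using dg_intro by blast
  then obtain K h where "subgroup K Q8" "h \<in> hom (Q8\<lparr>carrier := K\<rparr>) G" "h ` K = carrier G"
    using dg.main_hom by blast
  thus "is_section_of G Q8" using section_from_hom a by blast
qed

end
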